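(* Let $A$ be a $2r\times2r$ integer matrix. Then $A$ is (integrally) null-cobordant if and only if it is rationally null-cobordant.
   Context: $'$ denotes transpose. A $2r\times 2r$ integer matrix $A$ is null-cobordant if there is $P\in GL_{2r}(\mathbb Z)$ with $P'AP=\begin{pmatrix}0&N_1\\N_2&N_3\end{pmatrix}$, each $N_i$ an $r\times r$ block; a $2r\times2r$ rational matrix $A$ is rationally null-cobordant if such a $P$ exists in $GL_{2r}(\mathbb Q)$ (equivalently, the bilinear form $(x,y)\mapsto x'Ay$ on $\mathbb Q^{2r}$ vanishes on some $r$-dimensional subspace). *)

theory Defs
  imports "Jordan_Normal_Form.Matrix"
begin

definition null_cobordant_over :: "nat \<Rightarrow> 'a::comm_ring_1 mat \<Rightarrow> bool" where
  "null_cobordant_over r A \<longleftrightarrow>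
     A \<in> carrier_mat (2*r) (2*r) \<and>
     (\<exists>P \<in> carrier_mat (2*r) (2*r). invertible_mat P \<and>
        (\<forall>i<r. \<forall>j<r. (transpose_mat P * A * P) $$ (i, j) = 0))"

abbreviation null_cobordant :: "nat \<Rightarrow> int mat \<Rightarrow> bool" where
  "null_cobordant r A \<equiv> null_cobordant_over r A"

abbreviation rationally_null_cobordant :: "nat \<Rightarrow> rat mat \<Rightarrow> bool" where
  "rationally_null_cobordant r A \<equiv> null_cobordant_over r A"

end

theory Submission imports Defs "Jordan_Normal_Form.Determinant" begin

definition gmat :: "nat \<Rightarrow> nat \<Rightarrow> nat \<Rightarrow> int \<Rightarrow> int \<Rightarrow> int \<Rightarrow> int \<Rightarrow> int mat" where
  "gmat n k l p q s t = mat n n (\<lambda>(i,j). if i = k then (if j = k then p else if j = l then q else 0)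
     else if i = l then (if j = k then s else if j = l then t else 0) else (if i = j then 1 else 0))"

lemma gmat_carrier[simp]: "gmat n k l p q s t \<in> carrier_mat n n"
  by (simp add: gmat_def)

lemma gmat_mult:
  assumes kl: "k < n" "l < n" "k \<noteq> l" and M: "M \<in> carrier_mat n m" and ij: "i < n" "j < m"
  shows "(gmat n k l p q s t * M) $$ (i,j) = (if i = k then p * M $$ (k,j) + q * M $$ (l,j)
     else if i = l then s * M $$ (k,j) + t * M $$ (l,j) else M $$ (i,j))"
proof -
  have e: "(gmat n k l p q s t * M) $$ (i,j) = (\<Sum>x<n. gmat n k l p q s t $$ (i,x) * M $$ (x,j))"
    using M ij by (simp add: scalar_prod_def gmat_def lessThan_atLeast0)
  show ?thesis
  proof (cases "i = k")
    case True
    have "(\<Sum>x<n. gmat n k l p q s t $$ (i,x) * M $$ (x,j)) =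
       (\<Sum>x<n. (if x = k then p * M $$ (k,j) else 0) + (if x = l then q * M $$ (l,j) else 0))"
      by (rule sum.cong, insert True kl, auto simp: gmat_def)
    also have "\<dots> = p * M $$ (k,j) + q * M $$ (l,j)" using kl by (simp add: sum.distrib)
    finally show ?thesis using e True by simp
  next
    case F: False
    show ?thesis
    proof (cases "i = l")
      case True
      have "(\<Sum>x<n. gmat n k l p q s t $$ (i,x) * M $$ (x,j)) =
         (\<Sum>x<n. (if x = k then s * M $$ (k,j) else 0) + (if x = l then t * M $$ (l,j) else 0))"
        by (rule sum.cong, insert True kl ij, auto simp: gmat_def)
      also have "\<dots> = s * M $$ (k,j) + t * M $$ (l,j)" using kl by (simp add: sum.distrib)
      finally show ?thesis using e True F by simp
    next
      case False
      have "(\<Sum>x<n. gmat n k l p q s t $$ (i,x) * M $$ (x,j)) =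
         (\<Sum>x<n. (if x = i then M $$ (i,j) else 0))"
        by (rule sum.cong, insert False F kl ij, auto simp: gmat_def)
      also have "\<dots> = M $$ (i,j)" using ij by simp
      finally show ?thesis using e False F by simp
    qed
  qed
qed

lemma gmat_inv:
  assumes kl: "k < n" "l < n" "k \<noteq> l" and det: "p * t - q * s = 1"
  shows "gmat n k l p q s t * gmat n k l t (-q) (-s) p = 1\<^sub>m n"
proof (rule eq_matI)
  fix i j assume ij: "i < dim_row (1\<^sub>m n :: int mat)" "j < dim_col (1\<^sub>m n :: int mat)"
  show "(gmat n k l p q s t * gmat n k l t (-q) (-s) p) $$ (i,j) = 1\<^sub>m n $$ (i,j)"
    using ij kl det
    by (subst gmat_mult[OF kl gmat_carrier], auto simp: gmat_def algebra_simps)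
qed (auto simp: gmat_def)

definition unimod :: "nat \<Rightarrow> int mat \<Rightarrow> bool" where
  "unimod n U \<longleftrightarrow> U \<in> carrier_mat n n \<and> (\<exists>V\<in>carrier_mat n n. U * V = 1\<^sub>m n \<and> V * U = 1\<^sub>m n)"

lemma unimod_one: "unimod n (1\<^sub>m n)"
  unfolding unimod_def by (intro conjI bexI[of _ "1\<^sub>m n"]) auto

lemma unimod_mult:
  assumes "unimod n U" "unimod n W" shows "unimod n (U * W)"
proof -
  from assms obtain V where U: "U \<in> carrier_mat n n" and V: "V \<in> carrier_mat n n"
     and UV: "U * V = 1\<^sub>m n" "V * U = 1\<^sub>m n" unfolding unimod_def by auto
  from assms obtain Y where W: "W \<in> carrier_mat n n" and Y: "Y \<in> carrier_mat n n"
     and WY: "W * Y = 1\<^sub>m n" "Y * W = 1\<^sub>m n" unfolding unimod_def by auto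
  have "U * W * (Y * V) = U * (W * (Y * V))" using U V W Y
    by (intro assoc_mult_mat[of _ n n _ n _ n]) auto
  also have "W * (Y * V) = (W * Y) * V" using V W Y
    by (intro assoc_mult_mat[symmetric, of _ n n _ n _ n]) auto
  also have "\<dots> = V" using WY V by simp
  also have "U * V = 1\<^sub>m n" using UV by simp
  finally have 1: "U * W * (Y * V) = 1\<^sub>m n" .
  have "Y * V * (U * W) = Y * (V * (U * W))" using U V W Y
    by (intro assoc_mult_mat[of _ n n _ n _ n]) auto
  also have "V * (U * W) = (V * U) * W" using U V W
    by (intro assoc_mult_mat[symmetric, of _ n n _ n _ n]) auto
  also have "\<dots> = W" using UV W by simp
  also have "Y * W = 1\<^sub>m n" using WY by simp
  finally have 2: "Y * V * (U * W) = 1\<^sub>m n" .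
  show ?thesis unfolding unimod_def using 1 2 U W V Y
    by (intro conjI bexI[of _ "Y * V"]) auto
qed

lemma gmat_unimod:
  assumes kl: "k < n" "l < n" "k \<noteq> l" and det: "p * t - q * s = 1"
  shows "unimod n (gmat n k l p q s t)"
proof -
  have d2: "t * p - (-q) * (-s) = 1" using det by (simp add: algebra_simps)
  show ?thesis unfolding unimod_def
    using gmat_inv[OF kl det] gmat_inv[OF kl d2] by (intro conjI bexI[of _ "gmat n k l t (-q) (-s) p"], auto)
qed

definition col_tri :: "nat \<Rightarrow> int mat \<Rightarrow> bool" where
  "col_tri c M \<longleftrightarrow> (\<forall>j<c. \<forall>i. j < i \<and> i < dim_row M \<longrightarrow> M $$ (i,j) = 0)"

lemma clear_column:
  assumes M: "M \<in> carrier_mat n n" and c: "c < n" and ct: "col_tri c M"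
  shows "\<exists>U. unimod n U \<and> col_tri c (U * M) \<and> (\<forall>i. c < i \<and> i < k \<and> i < n \<longrightarrow> (U * M) $$ (i,c) = 0)"
proof (induction k)
  case 0
  show ?case using ct M unimod_one by (intro exI[of _ "1\<^sub>m n"]) auto
next
  case (Suc k)
  then obtain U where U: "unimod n U" and ct1: "col_tri c (U * M)"
    and z: "\<forall>i. c < i \<and> i < k \<and> i < n \<longrightarrow> (U * M) $$ (i,c) = 0" by blast
  define M1 where "M1 = U * M"
  have M1: "M1 \<in> carrier_mat n n" using U M unfolding M1_def unimod_def by auto
  show ?case
  proof (cases "c < k \<and> k < n \<and> M1 $$ (k,c) \<noteq> 0")
    case False
    then show ?thesis using U ct1 z unfolding M1_def
      by (intro exI[of _ U]) (auto simp: less_Suc_eq)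
  next
    case True
    define a where "a = M1 $$ (c,c)"
    define b where "b = M1 $$ (k,c)"
    define g where "g = gcd a b"
    have b0: "b \<noteq> 0" using True b_def by auto
    have g0: "g \<noteq> 0" using b0 g_def by simp
    obtain u v where uv: "u * a + v * b = g" using bezout_int g_def by metis
    define a' where "a' = a div g"
    define b' where "b' = b div g"
    have ag: "a = g * a'" unfolding a'_def g_def by simp
    have bg: "b = g * b'" unfolding b'_def g_def by simp
    have "g * (u * a' + v * b') = g * 1" using uv ag bg by (simp add: algebra_simps)
    hence det1: "u * a' - v * (- b') = 1" using g0 by simp
    have kl: "c < n" "k < n" "c \<noteq> k" using True c by auto
    define G where "G = gmat n c k u v (- b') a'"
    have GU: "unimod n (G * U)" unfolding G_def by (rule unimod_mult[OF gmat_unimod[OF kl det1] U])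
    have eq: "G * U * M = G * M1" unfolding M1_def G_def using U M
      by (metis assoc_mult_mat gmat_carrier unimod_def)
    have ent: "(G * M1) $$ (i,j) = (if i = c then u * M1 $$ (c,j) + v * M1 $$ (k,j)
     else if i = k then (- b') * M1 $$ (c,j) + a' * M1 $$ (k,j) else M1 $$ (i,j))"
      if "i < n" "j < n" for i j unfolding G_def by (rule gmat_mult[OF kl M1 that])
    have ct2: "col_tri c (G * M1)" unfolding col_tri_def
    proof (intro allI impI)
      fix j i assume ji: "j < c" "j < i \<and> i < dim_row (G * M1)"
      hence i: "i < n" and j: "j < n" using c by (auto simp: G_def gmat_def)
      have "M1 $$ (c,j) = 0" "M1 $$ (k,j) = 0" "M1 $$ (i,j) = 0"
        using ct1 ji i True M1 unfolding col_tri_def M1_def[symmetric] by auto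
      then show "(G * M1) $$ (i,j) = 0" using ent[OF i j] by simp
    qed
    have z2: "(G * M1) $$ (i,c) = 0" if "c < i" "i < Suc k" "i < n" for i
    proof (cases "i = k")
      case True
      have "(- b') * a + a' * b = 0" using ag bg by (simp add: algebra_simps)
      then show ?thesis using ent[OF that(3) c] True kl a_def b_def by simp
    next
      case False
      then show ?thesis using ent[OF that(3) c] z that unfolding M1_def by auto
    qed
    show ?thesis using GU ct2 z2 eq by (intro exI[of _ "G * U"]) auto
  qed
qed

lemma triangularize:
  assumes M: "M \<in> carrier_mat n n"
  shows "\<exists>U. unimod n U \<and> col_tri c (U * M)"
proof (induction c)
  case 0
  show ?case using unimod_one by (auto simp: col_tri_def)
next
  case (Suc c)
  then obtain U where U: "unimod n U" and ct: "col_tri c (U * M)" by blast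
  have UM: "U * M \<in> carrier_mat n n" using U M unfolding unimod_def by auto
  show ?case
  proof (cases "c < n")
    case False
    have "col_tri (Suc c) (U * M)" using ct False UM unfolding col_tri_def
      by (auto simp: less_Suc_eq)
    then show ?thesis using U by blast
  next
    case True
    obtain W where W: "unimod n W" and ct2: "col_tri c (W * (U * M))"
      and z: "\<forall>i. c < i \<and> i < n \<and> i < n \<longrightarrow> (W * (U * M)) $$ (i,c) = 0"
      using clear_column[OF UM True ct, of n] by blast
    have eq: "W * (U * M) = W * U * M" using W U M unfolding unimod_def
      by (metis assoc_mult_mat)
    have "col_tri (Suc c) (W * U * M)" using ct2 z W UM unfolding col_tri_def eq[symmetric]
      by (auto simp: less_Suc_eq unimod_def)
    then show ?thesis using unimod_mult[OF W U] by blast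
  qed
qed


lemma tXAY_entry:
  fixes A X Y :: "'a :: comm_ring_1 mat"
  assumes "A \<in> carrier_mat n n" "X \<in> carrier_mat n n" "Y \<in> carrier_mat n n" "i < n" "j < n"
  shows "(transpose_mat X * A * Y) $$ (i,j) = (\<Sum>l<n. (\<Sum>k<n. X $$ (k,i) * A $$ (k,l)) * Y $$ (l,j))"
  using assms by (simp add: scalar_prod_def lessThan_atLeast0 sum_distrib_left sum_distrib_right mult.assoc, subst sum.swap, simp)

lemma forward:
  fixes A :: "int mat"
  assumes "null_cobordant r A"
  shows "rationally_null_cobordant r (map_mat rat_of_int A)"
proof -
  let ?n = "2 * r"
  from assms obtain P where A: "A \<in> carrier_mat ?n ?n" and P: "P \<in> carrier_mat ?n ?n"
    and inv: "invertible_mat P" and z: "\<forall>i<r. \<forall>j<r. (transpose_mat P * A * P) $$ (i,j) = 0"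
    unfolding null_cobordant_over_def by blast
  from inv obtain B where PB: "P * B = 1\<^sub>m ?n" "B * P = 1\<^sub>m (dim_row B)"
    unfolding invertible_mat_def inverts_mat_def using P by auto
  have B: "B \<in> carrier_mat ?n ?n"
  proof -
    have "dim_col B = ?n" using PB(1) by (metis index_mult_mat(3) index_one_mat(3))
    moreover have "dim_row B = ?n" using PB(2) P by (metis index_mult_mat(3) index_one_mat(3) carrier_matD(2))
    ultimately show ?thesis by auto
  qed
  have h1: "map_mat rat_of_int P * map_mat rat_of_int B = 1\<^sub>m ?n"
    using of_int_hom.mat_hom_mult[OF P B, symmetric] PB by (simp add: of_int_hom.mat_hom_one)
  have h2: "map_mat rat_of_int B * map_mat rat_of_int P = 1\<^sub>m ?n"
    using of_int_hom.mat_hom_mult[OF B P, symmetric] PB B by (simp add: of_int_hom.mat_hom_one)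
  have invQ: "invertible_mat (map_mat rat_of_int P)"
    unfolding invertible_mat_def inverts_mat_def using h1 h2 P B
    by (intro conjI exI[of _ "map_mat rat_of_int B"]) (auto simp: square_mat.simps)
  have zQ: "(transpose_mat (map_mat rat_of_int P) * map_mat rat_of_int A * map_mat rat_of_int P) $$ (i,j) = 0"
    if "i < r" "j < r" for i j
  proof -
    have "(transpose_mat (map_mat rat_of_int P) * map_mat rat_of_int A * map_mat rat_of_int P) $$ (i,j)
       = rat_of_int ((transpose_mat P * A * P) $$ (i,j))"
      using tXAY_entry[of "map_mat rat_of_int A" ?n "map_mat rat_of_int P" "map_mat rat_of_int P" i j]
        tXAY_entry[OF A P P, of i j] that A P by (simp add: of_int_sum)
    then show ?thesis using z that by simp
  qed
  show ?thesis unfolding null_cobordant_over_def using A P invQ zQ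
    by (intro conjI bexI[of _ "map_mat rat_of_int P"]) auto
qed


lemma common_denom:
  fixes P :: "rat mat"
  assumes P: "P \<in> carrier_mat n n"
  shows "\<exists>d::int. d \<noteq> 0 \<and> (\<exists>Mi \<in> carrier_mat n n. map_mat rat_of_int Mi = rat_of_int d \<cdot>\<^sub>m P)"
proof -
  define S where "S = {0..<n} \<times> {0..<n}"
  define den where "den = (\<lambda>x::rat. snd (quotient_of x))"
  define num where "num = (\<lambda>x::rat. fst (quotient_of x))"
  define d where "d = (\<Prod>ij\<in>S. den (P $$ ij))"
  have denpos: "den x > 0" for x unfolding den_def using quotient_of_denom_pos[of x] by (cases "quotient_of x") auto
  have d0: "d \<noteq> 0" unfolding d_def using denpos by (simp add: S_def) (metis less_irrefl)
  have dvd: "den (P $$ (i,j)) dvd d" if "i < n" "j < n" for i j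
    unfolding d_def by (rule dvd_prodI) (use that in \<open>auto simp: S_def\<close>)
  have val: "rat_of_int (d div den x * num x) = rat_of_int d * x" if dx: "den x dvd d" for x
  proof -
    have x: "x = rat_of_int (num x) / rat_of_int (den x)" unfolding num_def den_def
      by (cases "quotient_of x") (simp add: quotient_of_div)
    obtain e where e: "d = den x * e" using dx by blast
    have "den x \<noteq> 0" using denpos[of x] by simp
    then show ?thesis using e by (subst x) (simp add: field_simps)
  qed
  define Mi where "Mi = mat n n (\<lambda>(i,j). d div den (P $$ (i,j)) * num (P $$ (i,j)))"
  have "map_mat rat_of_int Mi = rat_of_int d \<cdot>\<^sub>m P"
    by (rule eq_matI) (use P dvd val in \<open>auto simp: Mi_def\<close>)
  then show ?thesis using d0 by (intro exI[of _ d] conjI bexI[of _ Mi]) (auto simp: Mi_def)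
qed


lemma inv_carrier:
  fixes P B :: "'a :: semiring_1 mat"
  assumes P: "P \<in> carrier_mat n n" and PB: "P * B = 1\<^sub>m n" "B * P = 1\<^sub>m (dim_row B)"
  shows "B \<in> carrier_mat n n"
proof -
  have "dim_col B = n" using PB(1) by (metis index_mult_mat(3) index_one_mat(3))
  moreover have "dim_row B = n" using PB(2) P by (metis index_mult_mat(3) index_one_mat(3) carrier_matD(2))
  ultimately show ?thesis by auto
qed

lemma backward:
  fixes A :: "int mat"
  assumes A: "A \<in> carrier_mat (2*r) (2*r)"
    and rc: "rationally_null_cobordant r (map_mat rat_of_int A)"
  shows "null_cobordant r A"
proof -
  define n where "n = 2 * r"
  have A: "A \<in> carrier_mat n n" using A n_def by simp
  have rn: "r \<le> n" unfolding n_def by simp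
  let ?AQ = "map_mat rat_of_int A"
  have AQ: "?AQ \<in> carrier_mat n n" using A by simp
  from rc obtain P where P: "P \<in> carrier_mat n n"
    and inv: "invertible_mat P" and z: "\<forall>i<r. \<forall>j<r. (transpose_mat P * ?AQ * P) $$ (i,j) = 0"
    unfolding null_cobordant_over_def n_def by blast
  from inv obtain B where PB: "P * B = 1\<^sub>m n" "B * P = 1\<^sub>m (dim_row B)"
    unfolding invertible_mat_def inverts_mat_def using P by auto
  have B: "B \<in> carrier_mat n n" by (rule inv_carrier[OF P PB])
  have "det P * det B = 1" using det_mult[OF P B] PB by simp
  hence detP: "det P \<noteq> 0" by auto
  obtain d Mi where d0: "d \<noteq> 0" and Mi: "Mi \<in> carrier_mat n n"
    and Mid: "map_mat rat_of_int Mi = rat_of_int d \<cdot>\<^sub>m P"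
    using common_denom[OF P] by blast
  have "rat_of_int (det Mi) = det (rat_of_int d \<cdot>\<^sub>m P)" by (metis Mid of_int_hom.hom_det)
  also have "\<dots> = rat_of_int d ^ n * det P" using P by simp
  finally have detMi: "det Mi \<noteq> 0" using d0 detP by auto
  have Mz: "(transpose_mat Mi * A * Mi) $$ (i,j) = 0" if ij: "i < r" "j < r" for i j
  proof -
    have ij': "i < n" "j < n" using ij rn by auto
    have ent: "rat_of_int (Mi $$ (a,b)) = rat_of_int d * P $$ (a,b)" if "a < n" "b < n" for a b
    proof -
      have "map_mat rat_of_int Mi $$ (a,b) = (rat_of_int d \<cdot>\<^sub>m P) $$ (a,b)" using Mid by simp
      then show ?thesis using that Mi P by simp
    qed
    have "rat_of_int ((transpose_mat Mi * A * Mi) $$ (i,j))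
       = (\<Sum>l<n. (\<Sum>k<n. rat_of_int (Mi $$ (k,i)) * rat_of_int (A $$ (k,l))) * rat_of_int (Mi $$ (l,j)))"
      using tXAY_entry[OF A Mi Mi ij'] by (simp add: of_int_sum)
    also have "\<dots> = (\<Sum>l<n. (\<Sum>k<n. (rat_of_int d * P $$ (k,i)) * ?AQ $$ (k,l)) * (rat_of_int d * P $$ (l,j)))"
      using ent ij' A by (intro sum.cong refl) (simp_all)
    also have "\<dots> = rat_of_int d * rat_of_int d * (\<Sum>l<n. (\<Sum>k<n. P $$ (k,i) * ?AQ $$ (k,l)) * P $$ (l,j))"
      by (simp add: sum_distrib_left sum_distrib_right mult.assoc mult.left_commute)
    also have "(\<Sum>l<n. (\<Sum>k<n. P $$ (k,i) * ?AQ $$ (k,l)) * P $$ (l,j)) = 0"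
      using tXAY_entry[OF AQ P P ij'] z ij by simp
    finally show ?thesis by simp
  qed
  obtain U where U: "unimod n U" and ct: "col_tri n (U * Mi)" using triangularize[OF Mi] by blast
  from U obtain V where Uc: "U \<in> carrier_mat n n" and V: "V \<in> carrier_mat n n"
    and UV: "U * V = 1\<^sub>m n" "V * U = 1\<^sub>m n" unfolding unimod_def by auto
  define T where "T = U * Mi"
  have T: "T \<in> carrier_mat n n" using Uc Mi T_def by simp
  have Tz: "T $$ (a,b) = 0" if "b < a" "a < n" for a b
    using ct that T unfolding col_tri_def T_def[symmetric] by auto
  have "det T = det U * det Mi" using det_mult[OF Uc Mi] T_def by simp
  moreover have "det U * det V = 1" using det_mult[OF Uc V] UV by simp
  ultimately have detT: "det T \<noteq> 0" using detMi by auto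
  have "upper_triangular T" using Tz T unfolding upper_triangular_def by auto
  hence "det T = prod_list (diag_mat T)" using det_upper_triangular T by blast
  hence Tdiag: "T $$ (a,a) \<noteq> 0" if "a < n" for a
    using detT that T by (auto simp: diag_mat_def prod_list_zero_iff)
  have MiVT: "Mi = V * T"
  proof -
    have "V * T = (V * U) * Mi" unfolding T_def using V Uc Mi by (simp add: assoc_mult_mat)
    then show ?thesis using UV Mi by simp
  qed
  define C where "C = transpose_mat V * A * V"
  have C: "C \<in> carrier_mat n n" using C_def A V by simp
  have MAM: "transpose_mat Mi * A * Mi = transpose_mat T * C * T"
  proof -
    have "transpose_mat Mi = transpose_mat T * transpose_mat V"
      unfolding MiVT using transpose_mult[OF V T] .
    then show ?thesis unfolding C_def MiVT using T V A
      by (simp add: assoc_mult_mat[of _ n n _ n _ n])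
  qed
  have TCT: "(\<Sum>l<n. (\<Sum>k<n. T $$ (k,i) * C $$ (k,l)) * T $$ (l,j)) = 0" if "i < r" "j < r" for i j
    using Mz[OF that] MAM tXAY_entry[OF C T T, of i j] that rn by simp
  have Cz: "\<forall>i j. i + j = s \<longrightarrow> i < r \<longrightarrow> j < r \<longrightarrow> C $$ (i,j) = 0" for s
  proof (induction s rule: less_induct)
    case (less s)
    show ?case
    proof (intro allI impI)
      fix i j assume s: "i + j = s" and ij: "i < r" "j < r"
      have ij': "i < n" "j < n" using ij rn by auto
      have IH: "C $$ (k,l) = 0" if "k + l < i + j" "k < r" "l < r" for k l
        using less that s by blast
      have inner: "(\<Sum>k<n. T $$ (k,i) * C $$ (k,l)) = (if l = j then T $$ (i,i) * C $$ (i,j) else 0)"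
        if "l \<le> j" for l
      proof -
        have "(\<Sum>k<n. T $$ (k,i) * C $$ (k,l)) = (\<Sum>k<n. if k = i then (if l = j then T $$ (i,i) * C $$ (i,j) else 0) else 0)"
        proof (rule sum.cong[OF refl])
          fix k assume k: "k \<in> {..<n}"
          show "T $$ (k,i) * C $$ (k,l) = (if k = i then (if l = j then T $$ (i,i) * C $$ (i,j) else 0) else 0)"
          proof (cases "i < k")
            case True then show ?thesis using Tz k by auto
          next
            case False
            show ?thesis
            proof (cases "k = i \<and> l = j")
              case True then show ?thesis by simp
            next
              case F2: False
              have "C $$ (k,l) = 0" using IH[of k l] False F2 that ij by auto
              then show ?thesis using F2 by auto
            qed
          qed
        qed
        also have "\<dots> = (if l = j then T $$ (i,i) * C $$ (i,j) else 0)" using ij' by simp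
        finally show ?thesis .
      qed
      have "(\<Sum>l<n. (\<Sum>k<n. T $$ (k,i) * C $$ (k,l)) * T $$ (l,j))
          = (\<Sum>l<n. if l = j then T $$ (i,i) * C $$ (i,j) * T $$ (j,j) else 0)"
      proof (rule sum.cong[OF refl])
        fix l assume l: "l \<in> {..<n}"
        show "(\<Sum>k<n. T $$ (k,i) * C $$ (k,l)) * T $$ (l,j) = (if l = j then T $$ (i,i) * C $$ (i,j) * T $$ (j,j) else 0)"
        proof (cases "j < l")
          case True then show ?thesis using Tz l by auto
        next
          case False then show ?thesis using inner[of l] by auto
        qed
      qed
      also have "\<dots> = T $$ (i,i) * C $$ (i,j) * T $$ (j,j)" using ij' by simp
      finally have "T $$ (i,i) * C $$ (i,j) * T $$ (j,j) = 0" using TCT[OF ij] by simp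
      then show "C $$ (i,j) = 0" using Tdiag[OF ij'(1)] Tdiag[OF ij'(2)] by simp
    qed
  qed
  have invV: "invertible_mat V"
    unfolding invertible_mat_def inverts_mat_def using UV V Uc
    by (intro conjI exI[of _ U]) (auto simp: square_mat.simps)
  show ?thesis unfolding null_cobordant_over_def
    using A V invV Cz unfolding n_def C_def by (intro conjI bexI[of _ V]) auto
qed

theorem mainTheorem20:
  fixes A :: "int mat" and r :: nat
  assumes "A \<in> carrier_mat (2*r) (2*r)"
  shows "null_cobordant r A \<longleftrightarrow> rationally_null_cobordant r (map_mat rat_of_int A)"
  using forward backward[OF assms] by blast

end
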